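(* Fix $\theta\in\mathbb{R}^d$, a coarsening function $c:\mathcal{D}\to\mathcal{D}$, and $\ell\in[L]$. Let $(C,D)\sim\mathbb{G}$, $U\sim\mathbb{U}$, $\tilde D_1\sim\mathbb{P}_\theta(C)=\mathsf{T}(\theta,C)$ and $\tilde D_2\sim\mathbb{Q}_\theta(C)=\mathsf{S}(\theta,C)$, and assume $\tilde D_1,\tilde D_2,U$ are pairwise independent. Let $g:\mathcal{D}\times\mathcal{U}\to[0,1]$ be a minimizer, over all functions $f:\mathcal{D}\times\mathcal{U}\to[0,1]$, of $\sum_{i\in\{1,2\}}\mathbf{E}[\lvert f(c(\tilde D_i),U)-h_\ell(D,U)\rvert]$. Define $$\gamma=\sum_{i\in\{1,2\}}\mathbf{E}[\lvert h_\ell(c(\tilde D_i),U)-h_\ell(\tilde D_i,U)\rvert],\qquad \varphi=\sum_{i\in\{1,2\}}\mathbf{E}[\lvert g(c(\tilde D_i),U)-h_\ell(D,U)\rvert],$$ $$\delta=\mathbf{E}\Big[\sum_{x\in c(\mathcal{D})}\lvert g(x,U)-h_\ell(x,U)\rvert\Big].$$ Then $$\mathbf{TD}^\ell_{\mathsf{T}}(\theta)\le \gamma+\varphi+\mathbf{TD}^\ell_{\mathsf{S}}(\theta)+\sqrt{\varepsilon_c(\tilde D_1,\tilde D_2)\cdot\delta}.$$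
   Context: $\mathcal{C}$ is a set of dialogue contexts, $\mathcal{D}$ a set of dialogues, $\mathcal{U}$ an arbitrary set with a distribution $\mathbb{U}$ on it. $\mathbb{G}$ is a (goal) distribution on $\mathcal{C}\times\mathcal{D}$. Test functions $h_1,\dots,h_L:\mathcal{D}\times\mathcal{U}\to[0,1]$ are fixed. An environment $\mathsf{E}$ is a map $(\theta,c)\mapsto\mathbb{P}_\theta(c)$ assigning to parameters $\theta\in\mathbb{R}^d$ and context $c\in\mathcal{C}$ a distribution over $\mathcal{D}$; $\mathsf{S}$ and $\mathsf{T}$ are two environments. Test divergence: $\mathbf{TD}^\ell_{\mathsf{E}}(\theta)=\mathbf{E}[\lvert h_\ell(D,U)-h_\ell(\hat D,U)\rvert]$ where $(C,D)\sim\mathbb{G}$, $\hat D\sim\mathsf{E}(\theta,C)$, $U\sim\mathbb{U}$ independent. Coarsening function: a map $c:\mathcal{D}\to\mathcal{D}$ with $c(\mathcal{D})$ finite and $\lvert c(\mathcal{D})\rvert<\lvert\mathcal{D}\rvert$. Discrete energy distance: for independent $A,B$, $\varepsilon_{01}(A,B)=2\mathbf{E}[1\{A\neq B\}]-\mathbf{E}[1\{A\neq A'\}]-\mathbf{E}[1\{B\neq B'\}]$ with $A',B'$ independent copies of $A,B$; and $\varepsilon_c(A,B)=\varepsilon_{01}(c(A),c(B))$. *)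

theory Defs
  imports "HOL-Probability.Probability"
begin

definition environment :: "'c measure \<Rightarrow> 'd measure \<Rightarrow> ('p \<Rightarrow> 'c \<Rightarrow> 'd measure) \<Rightarrow> bool" where
  "environment MC MD E \<longleftrightarrow> (\<forall>\<theta>. E \<theta> \<in> MC \<rightarrow>\<^sub>M prob_algebra MD)"

definition coarsening :: "'d measure \<Rightarrow> ('d \<Rightarrow> 'd) \<Rightarrow> bool" where
  "coarsening MD c \<longleftrightarrow>
     c \<in> MD \<rightarrow>\<^sub>M MD \<and> c \<in> MD \<rightarrow>\<^sub>M count_space UNIV \<and>
     finite (c ` space MD) \<and>
     (infinite (space MD) \<or> card (c ` space MD) < card (space MD))"

(* E[F(D, Dhat, U)] where (C,D) ~ G, Dhat ~ P(C), U ~ UU independent *)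
definition expect_env :: "('c \<times> 'd) measure \<Rightarrow> ('c \<Rightarrow> 'd measure) \<Rightarrow> 'u measure
    \<Rightarrow> ('d \<Rightarrow> 'd \<Rightarrow> 'u \<Rightarrow> real) \<Rightarrow> real" where
  "expect_env G P UU F = (\<integral>cd. (\<integral>x. (\<integral>u. F (snd cd) x u \<partial>UU) \<partial>P (fst cd)) \<partial>G)"

definition TD :: "('c \<times> 'd) measure \<Rightarrow> 'u measure \<Rightarrow> ('d \<times> 'u \<Rightarrow> real)
    \<Rightarrow> ('p \<Rightarrow> 'c \<Rightarrow> 'd measure) \<Rightarrow> 'p \<Rightarrow> real" where
  "TD G UU hl E \<theta> = expect_env G (E \<theta>) UU (\<lambda>d x u. \<bar>hl (d, u) - hl (x, u)\<bar>)"

definition marginal :: "('c \<times> 'd) measure \<Rightarrow> ('c \<Rightarrow> 'd measure) \<Rightarrow> 'd measure" where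
  "marginal G P = G \<bind> (\<lambda>cd. P (fst cd))"

(* discrete energy distance of independent A ~ MA, B ~ MB (A', B' independent copies) *)
definition eps01 :: "'a measure \<Rightarrow> 'a measure \<Rightarrow> real" where
  "eps01 MA MB =
     2 * (\<integral>a. (\<integral>b. of_bool (a \<noteq> b) \<partial>MB) \<partial>MA)
     - (\<integral>a. (\<integral>a'. of_bool (a \<noteq> a') \<partial>MA) \<partial>MA)
     - (\<integral>b. (\<integral>b'. of_bool (b \<noteq> b') \<partial>MB) \<partial>MB)"

definition eps_c :: "('d \<Rightarrow> 'd) \<Rightarrow> 'd measure \<Rightarrow> 'd measure \<Rightarrow> real" where
  "eps_c c MA MB = eps01 (distr MA (count_space UNIV) c) (distr MB (count_space UNIV) c)"

end

theory Submission imports Defs begin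

lemma bnd_int:
  fixes f :: "'a \<Rightarrow> real"
  assumes "prob_space M" "f \<in> borel_measurable M" "\<And>x. x \<in> space M \<Longrightarrow> \<bar>f x\<bar> \<le> B"
  shows "integrable M f" "\<bar>integral\<^sup>L M f\<bar> \<le> B"
proof -
  interpret prob_space M by fact
  show i: "integrable M f"
    by (rule integrable_const_bound[where B=B]) (use assms in auto)
  have "integral\<^sup>L M f \<le> B"
    by (rule integral_le_const[OF i]) (use assms in \<open>auto simp: abs_le_iff\<close>)
  moreover have "-B \<le> integral\<^sup>L M f"
    by (rule integral_ge_const[OF i], rule AE_I2) (use assms in \<open>force simp: abs_le_iff\<close>)
  ultimately show "\<bar>integral\<^sup>L M f\<bar> \<le> B" by auto
qed

lemma integral_measurable_subprob_algebra2':
  fixes f :: "_ \<Rightarrow> _ \<Rightarrow> real"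
  assumes f: "(\<lambda>(x, y). f x y) \<in> borel_measurable (M \<Otimes>\<^sub>M N)"
  assumes L: "L \<in> measurable M (subprob_algebra N)"
  shows "(\<lambda>x. integral\<^sup>L (L x) (f x)) \<in> borel_measurable M"
proof -
  have pm: "(\<lambda>(x, y). (x, y)) \<in> M \<Otimes>\<^sub>M N \<rightarrow>\<^sub>M M \<Otimes>\<^sub>M N"
    by (simp add: case_prod_beta' measurable_ident_sets)
  have d: "(\<lambda>x. distr (L x) (M \<Otimes>\<^sub>M N) (\<lambda>y. (x, y))) \<in> M \<rightarrow>\<^sub>M subprob_algebra (M \<Otimes>\<^sub>M N)"
    by (rule measurable_distr2[OF pm L])
  have "(\<lambda>x. integral\<^sup>L (distr (L x) (M \<Otimes>\<^sub>M N) (\<lambda>y. (x, y))) (\<lambda>(x, y). f x y)) \<in> borel_measurable M"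
    by (rule measurable_compose[OF d integral_measurable_subprob_algebra[OF f]])
  then show ?thesis
  proof (rule measurable_cong[THEN iffD1, rotated])
    fix x assume x: "x \<in> space M"
    have s: "sets (L x) = sets N" using L x by (rule sets_kernel)
    have "(\<lambda>y. (x, y)) \<in> measurable N (M \<Otimes>\<^sub>M N)"
      using x by (rule measurable_Pair1')
    then have m: "(\<lambda>y. (x, y)) \<in> measurable (L x) (M \<Otimes>\<^sub>M N)"
      by (subst measurable_cong_sets[OF s refl])
    show "integral\<^sup>L (distr (L x) (M \<Otimes>\<^sub>M N) (\<lambda>y. (x, y))) (\<lambda>(x, y). f x y) = integral\<^sup>L (L x) (f x)"
      using integral_distr[OF m f] by simp
  qed
qed

definition good :: "'d measure \<Rightarrow> 'u measure \<Rightarrow> ('d \<Rightarrow> 'd \<Rightarrow> 'u \<Rightarrow> real) \<Rightarrow> bool" where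
  "good MD UU F \<longleftrightarrow> (\<lambda>z. F (fst z) (fst (snd z)) (snd (snd z))) \<in> borel_measurable (MD \<Otimes>\<^sub>M (MD \<Otimes>\<^sub>M UU))
     \<and> (\<exists>B. \<forall>d\<in>space MD. \<forall>x\<in>space MD. \<forall>u\<in>space UU. \<bar>F d x u\<bar> \<le> B)"

locale envs =
  fixes MC :: "'c measure" and MD :: "'d measure" and G :: "('c \<times> 'd) measure"
    and UU :: "'u measure" and P :: "'c \<Rightarrow> 'd measure"
  assumes G: "prob_space G" "sets G = sets (MC \<Otimes>\<^sub>M MD)" and UU: "prob_space UU"
    and P: "P \<in> MC \<rightarrow>\<^sub>M prob_algebra MD"
begin

lemma spG: "space G = space MC \<times> space MD"
  using sets_eq_imp_space_eq[OF G(2)] by (simp add: space_pair_measure)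

lemma Pc: "c \<in> space MC \<Longrightarrow> prob_space (P c) \<and> sets (P c) = sets MD"
  using measurable_space[OF P] by (auto simp: space_prob_algebra)

lemma Lm: "(\<lambda>cd. P (fst cd)) \<in> (MC \<Otimes>\<^sub>M MD) \<rightarrow>\<^sub>M subprob_algebra MD"
  by (rule measurable_compose[OF measurable_fst measurable_prob_algebraD[OF P]])

context
  fixes F :: "'d \<Rightarrow> 'd \<Rightarrow> 'u \<Rightarrow> real"
  assumes gF: "good MD UU F"
begin

lemma Fm: "(\<lambda>z. F (fst z) (fst (snd z)) (snd (snd z))) \<in> borel_measurable (MD \<Otimes>\<^sub>M (MD \<Otimes>\<^sub>M UU))"
  using gF by (simp add: good_def)

lemma FB: obtains B where "\<And>d x u. d\<in>space MD \<Longrightarrow> x\<in>space MD \<Longrightarrow> u\<in>space UU \<Longrightarrow> \<bar>F d x u\<bar> \<le> B"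
  using gF by (auto simp: good_def)

lemma int1:
  assumes "d \<in> space MD" "x \<in> space MD"
  shows "integrable UU (F d x)"
proof -
  obtain B where B: "\<And>d x u. d\<in>space MD \<Longrightarrow> x\<in>space MD \<Longrightarrow> u\<in>space UU \<Longrightarrow> \<bar>F d x u\<bar> \<le> B" using FB by blast
  have m: "(\<lambda>u. (d, x, u)) \<in> UU \<rightarrow>\<^sub>M MD \<Otimes>\<^sub>M (MD \<Otimes>\<^sub>M UU)"
    by (rule measurable_Pair[OF measurable_const[OF assms(1)] measurable_Pair[OF measurable_const[OF assms(2)] measurable_ident_sets[OF refl]]])
  have fm: "F d x \<in> borel_measurable UU"
    using measurable_compose[OF m Fm] by (simp only: fst_conv snd_conv)
  show ?thesis by (rule bnd_int(1)[OF UU fm], rule B[OF assms], assumption)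
qed

lemma bnd1:
  assumes "d \<in> space MD" "x \<in> space MD"
  and B: "\<And>d x u. d\<in>space MD \<Longrightarrow> x\<in>space MD \<Longrightarrow> u\<in>space UU \<Longrightarrow> \<bar>F d x u\<bar> \<le> B"
  shows "\<bar>\<integral>u. F d x u \<partial>UU\<bar> \<le> B"
proof -
  have m: "(\<lambda>u. (d, x, u)) \<in> UU \<rightarrow>\<^sub>M MD \<Otimes>\<^sub>M (MD \<Otimes>\<^sub>M UU)"
    by (rule measurable_Pair[OF measurable_const[OF assms(1)] measurable_Pair[OF measurable_const[OF assms(2)] measurable_ident_sets[OF refl]]])
  have fm: "F d x \<in> borel_measurable UU"
    using measurable_compose[OF m Fm] by (simp only: fst_conv snd_conv)
  show ?thesis by (rule bnd_int(2)[OF UU fm], rule B[OF assms(1,2)], assumption)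
qed

lemma meas1: "(\<lambda>dx. \<integral>u. F (fst dx) (snd dx) u \<partial>UU) \<in> borel_measurable (MD \<Otimes>\<^sub>M MD)"
proof -
  interpret UU: prob_space UU by (rule UU)
  have m: "(\<lambda>z. (fst (fst z), snd (fst z), snd z)) \<in> (MD \<Otimes>\<^sub>M MD) \<Otimes>\<^sub>M UU \<rightarrow>\<^sub>M MD \<Otimes>\<^sub>M (MD \<Otimes>\<^sub>M UU)"
    by (rule measurable_Pair[OF measurable_compose[OF measurable_fst measurable_fst] measurable_Pair[OF measurable_compose[OF measurable_fst measurable_snd] measurable_snd]])
  have "(\<lambda>z. F (fst (fst z)) (snd (fst z)) (snd z)) \<in> borel_measurable ((MD \<Otimes>\<^sub>M MD) \<Otimes>\<^sub>M UU)"
    using measurable_compose[OF m Fm] by (simp only: fst_conv snd_conv)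
  then have "case_prod (\<lambda>dx u. F (fst dx) (snd dx) u) \<in> borel_measurable ((MD \<Otimes>\<^sub>M MD) \<Otimes>\<^sub>M UU)"
    by (simp add: case_prod_beta')
  then show ?thesis by (rule UU.borel_measurable_lebesgue_integral)
qed

lemma meas1x: assumes "c \<in> space MC" "d \<in> space MD"
  shows "(\<lambda>x. \<integral>u. F d x u \<partial>UU) \<in> borel_measurable (P c)"
proof -
  have m: "(\<lambda>x. (d, x)) \<in> MD \<rightarrow>\<^sub>M MD \<Otimes>\<^sub>M MD"
    by (rule measurable_Pair[OF measurable_const[OF assms(2)] measurable_ident_sets[OF refl]])
  have "(\<lambda>x. \<integral>u. F d x u \<partial>UU) \<in> borel_measurable MD"
    using measurable_compose[OF m meas1] by (simp only: fst_conv snd_conv)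
  then show ?thesis by (subst measurable_cong_sets[OF conjunct2[OF Pc[OF assms(1)]] refl])
qed

lemma int2: assumes "c \<in> space MC" "d \<in> space MD"
  shows "integrable (P c) (\<lambda>x. \<integral>u. F d x u \<partial>UU)"
proof -
  obtain B where B: "\<And>d x u. d\<in>space MD \<Longrightarrow> x\<in>space MD \<Longrightarrow> u\<in>space UU \<Longrightarrow> \<bar>F d x u\<bar> \<le> B" using FB by blast
  have sp: "space (P c) = space MD" using Pc[OF assms(1)] sets_eq_imp_space_eq by blast
  show ?thesis
    by (rule bnd_int(1)[OF conjunct1[OF Pc[OF assms(1)]] meas1x[OF assms]], rule bnd1[OF assms(2) _ B]) (simp add: sp)
qed

lemma bnd2: assumes "c \<in> space MC" "d \<in> space MD"
  and B: "\<And>d x u. d\<in>space MD \<Longrightarrow> x\<in>space MD \<Longrightarrow> u\<in>space UU \<Longrightarrow> \<bar>F d x u\<bar> \<le> B"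
  shows "\<bar>\<integral>x. \<integral>u. F d x u \<partial>UU \<partial>P c\<bar> \<le> B"
proof -
  have sp: "space (P c) = space MD" using Pc[OF assms(1)] sets_eq_imp_space_eq by blast
  show ?thesis
    by (rule bnd_int(2)[OF conjunct1[OF Pc[OF assms(1)]] meas1x[OF assms(1,2)]], rule bnd1[OF assms(2) _ B]) (simp add: sp)
qed

lemma meas2: "(\<lambda>cd. \<integral>x. \<integral>u. F (snd cd) x u \<partial>UU \<partial>P (fst cd)) \<in> borel_measurable G"
proof -
  have m: "(\<lambda>z. (snd (fst z), snd z)) \<in> (MC \<Otimes>\<^sub>M MD) \<Otimes>\<^sub>M MD \<rightarrow>\<^sub>M MD \<Otimes>\<^sub>M MD"
    by (rule measurable_Pair[OF measurable_compose[OF measurable_fst measurable_snd] measurable_snd])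
  have "(\<lambda>z. \<integral>u. F (snd (fst z)) (snd z) u \<partial>UU) \<in> borel_measurable ((MC \<Otimes>\<^sub>M MD) \<Otimes>\<^sub>M MD)"
    using measurable_compose[OF m meas1] by (simp only: fst_conv snd_conv)
  then have "(\<lambda>(cd, x). \<integral>u. F (snd cd) x u \<partial>UU) \<in> borel_measurable ((MC \<Otimes>\<^sub>M MD) \<Otimes>\<^sub>M MD)"
    by (simp add: case_prod_beta')
  from integral_measurable_subprob_algebra2'[OF this Lm]
  show ?thesis by (simp add: measurable_cong_sets[OF G(2) refl])
qed

lemma int3: "integrable G (\<lambda>cd. \<integral>x. \<integral>u. F (snd cd) x u \<partial>UU \<partial>P (fst cd))"
proof -
  obtain B where B: "\<And>d x u. d\<in>space MD \<Longrightarrow> x\<in>space MD \<Longrightarrow> u\<in>space UU \<Longrightarrow> \<bar>F d x u\<bar> \<le> B" using FB by blast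
  show ?thesis
    by (rule bnd_int(1)[OF G(1) meas2], rule bnd2[OF _ _ B]) (auto simp: spG)
qed

end

lemma good_add: assumes "good MD UU F1" "good MD UU F2"
  shows "good MD UU (\<lambda>d x u. F1 d x u + F2 d x u)"
proof -
  obtain B1 where B1: "\<And>d x u. d\<in>space MD \<Longrightarrow> x\<in>space MD \<Longrightarrow> u\<in>space UU \<Longrightarrow> \<bar>F1 d x u\<bar> \<le> B1" using FB[OF assms(1)] by blast
  obtain B2 where B2: "\<And>d x u. d\<in>space MD \<Longrightarrow> x\<in>space MD \<Longrightarrow> u\<in>space UU \<Longrightarrow> \<bar>F2 d x u\<bar> \<le> B2" using FB[OF assms(2)] by blast
  have "\<forall>d\<in>space MD. \<forall>x\<in>space MD. \<forall>u\<in>space UU. \<bar>F1 d x u + F2 d x u\<bar> \<le> B1 + B2"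
    using B1 B2 by (smt (verit))
  then show ?thesis using Fm[OF assms(1)] Fm[OF assms(2)] unfolding good_def by auto
qed

lemma spG': "cd \<in> space G \<Longrightarrow> fst cd \<in> space MC \<and> snd cd \<in> space MD"
  by (simp add: spG mem_Times_iff)

lemma spP: "c \<in> space MC \<Longrightarrow> space (P c) = space MD"
  using Pc sets_eq_imp_space_eq by blast

lemma ee_add: assumes g1: "good MD UU F1" and g2: "good MD UU F2"
  shows "expect_env G P UU (\<lambda>d x u. F1 d x u + F2 d x u) = expect_env G P UU F1 + expect_env G P UU F2"
proof -
  have eq: "(\<integral>x. \<integral>u. F1 (snd cd) x u + F2 (snd cd) x u \<partial>UU \<partial>P (fst cd))
     = (\<integral>x. \<integral>u. F1 (snd cd) x u \<partial>UU \<partial>P (fst cd)) + (\<integral>x. \<integral>u. F2 (snd cd) x u \<partial>UU \<partial>P (fst cd))"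
    if cdG: "cd \<in> space G" for cd
  proof -
    have c: "fst cd \<in> space MC" and d: "snd cd \<in> space MD" using spG'[OF cdG] by auto
    have "(\<integral>x. \<integral>u. F1 (snd cd) x u + F2 (snd cd) x u \<partial>UU \<partial>P (fst cd))
       = (\<integral>x. (\<integral>u. F1 (snd cd) x u \<partial>UU) + (\<integral>u. F2 (snd cd) x u \<partial>UU) \<partial>P (fst cd))"
    proof (rule Bochner_Integration.integral_cong[OF refl])
      fix x assume "x \<in> space (P (fst cd))"
      then have x: "x \<in> space MD" using spP[OF c] by simp
      show "(\<integral>u. F1 (snd cd) x u + F2 (snd cd) x u \<partial>UU) = (\<integral>u. F1 (snd cd) x u \<partial>UU) + (\<integral>u. F2 (snd cd) x u \<partial>UU)"
        by (rule Bochner_Integration.integral_add[OF int1[OF g1 d x] int1[OF g2 d x]])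
    qed
    also have "\<dots> = (\<integral>x. \<integral>u. F1 (snd cd) x u \<partial>UU \<partial>P (fst cd)) + (\<integral>x. \<integral>u. F2 (snd cd) x u \<partial>UU \<partial>P (fst cd))"
      by (rule Bochner_Integration.integral_add[OF int2[OF g1 c d] int2[OF g2 c d]])
    finally show ?thesis .
  qed
  have "expect_env G P UU (\<lambda>d x u. F1 d x u + F2 d x u) =
     (\<integral>cd. (\<integral>x. \<integral>u. F1 (snd cd) x u \<partial>UU \<partial>P (fst cd)) + (\<integral>x. \<integral>u. F2 (snd cd) x u \<partial>UU \<partial>P (fst cd)) \<partial>G)"
    unfolding expect_env_def by (rule Bochner_Integration.integral_cong[OF refl eq])
  also have "\<dots> = expect_env G P UU F1 + expect_env G P UU F2"
    unfolding expect_env_def by (rule Bochner_Integration.integral_add[OF int3[OF g1] int3[OF g2]])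
  finally show ?thesis .
qed

lemma ee_mono: assumes g1: "good MD UU F1" and g2: "good MD UU F2"
  and le: "\<And>d x u. d\<in>space MD \<Longrightarrow> x\<in>space MD \<Longrightarrow> u\<in>space UU \<Longrightarrow> F1 d x u \<le> F2 d x u"
  shows "expect_env G P UU F1 \<le> expect_env G P UU F2"
  unfolding expect_env_def
proof (rule integral_mono[OF int3[OF g1] int3[OF g2]])
  fix cd assume cdG: "cd \<in> space G"
  have c: "fst cd \<in> space MC" and d: "snd cd \<in> space MD" using spG'[OF cdG] by auto
  show "(\<integral>x. \<integral>u. F1 (snd cd) x u \<partial>UU \<partial>P (fst cd)) \<le> (\<integral>x. \<integral>u. F2 (snd cd) x u \<partial>UU \<partial>P (fst cd))"
  proof (rule integral_mono[OF int2[OF g1 c d] int2[OF g2 c d]])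
    fix x assume "x \<in> space (P (fst cd))"
    then have x: "x \<in> space MD" using spP[OF c] by simp
    show "(\<integral>u. F1 (snd cd) x u \<partial>UU) \<le> (\<integral>u. F2 (snd cd) x u \<partial>UU)"
      by (rule integral_mono[OF int1[OF g1 d x] int1[OF g2 d x]], rule le[OF d x], assumption)
  qed
qed

lemma Lm': "(\<lambda>cd. P (fst cd)) \<in> G \<rightarrow>\<^sub>M subprob_algebra MD"
  by (subst measurable_cong_sets[OF G(2) refl]) (rule Lm)

lemma marg: "prob_space (marginal G P)" "sets (marginal G P) = sets MD"
proof -
  have pr: "prob_space (P (fst cd))" if "cd \<in> space G" for cd
    using Pc spG'[OF that] by blast
  have se: "sets (P (fst cd)) = sets MD" if "cd \<in> space G" for cd
    using Pc spG'[OF that] by blast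
  show "prob_space (marginal G P)" unfolding marginal_def
    by (rule prob_space.prob_space_bind[OF G(1) _ Lm'], rule AE_I2, rule pr)
  show "sets (marginal G P) = sets MD" unfolding marginal_def
    by (rule sets_bind[OF se prob_space.not_empty[OF G(1)]])
qed

lemma ee_marg:
  assumes gF: "good MD UU F" and K: "\<And>d x. d\<in>space MD \<Longrightarrow> x\<in>space MD \<Longrightarrow> (\<integral>u. F d x u \<partial>UU) = K x"
    and Km: "K \<in> borel_measurable MD" and KB: "\<And>x. x \<in> space MD \<Longrightarrow> \<bar>K x\<bar> \<le> B"
  shows "expect_env G P UU F = (\<integral>x. K x \<partial>marginal G P)"
proof -
  have "expect_env G P UU F = (\<integral>cd. (\<integral>x. K x \<partial>P (fst cd)) \<partial>G)"
    unfolding expect_env_def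
  proof (rule Bochner_Integration.integral_cong[OF refl])
    fix cd assume cdG: "cd \<in> space G"
    have c: "fst cd \<in> space MC" and d: "snd cd \<in> space MD" using spG'[OF cdG] by auto
    show "(\<integral>x. \<integral>u. F (snd cd) x u \<partial>UU \<partial>P (fst cd)) = (\<integral>x. K x \<partial>P (fst cd))"
    proof (rule Bochner_Integration.integral_cong[OF refl])
      fix x assume "x \<in> space (P (fst cd))"
      then have x: "x \<in> space MD" using spP[OF c] by simp
      show "(\<integral>u. F (snd cd) x u \<partial>UU) = K x" by (rule K[OF d x])
    qed
  qed
  also have "\<dots> = (\<integral>x. K x \<partial>marginal G P)"
  proof -
    have ae: "AE cd in G. emeasure (P (fst cd)) (space (P (fst cd))) \<le> ennreal 1"
    proof (rule AE_I2)
      fix cd assume "cd \<in> space G"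
      then have "prob_space (P (fst cd))" using Pc spG' by blast
      then show "emeasure (P (fst cd)) (space (P (fst cd))) \<le> ennreal 1"
        by (simp add: prob_space.emeasure_space_1)
    qed
    show ?thesis unfolding marginal_def
      by (rule integral_bind[OF Km KB Lm' prob_space.axioms(1)[OF G(1)] ae, symmetric])
  qed
  finally show ?thesis .
qed

end

lemma int_c:
  fixes \<phi> :: "'d \<Rightarrow> real"
  assumes M: "finite_measure M" and sM: "sets M = sets MD" and c: "coarsening MD c"
  shows "(\<integral>x. \<phi> (c x) \<partial>M) = (\<Sum>z\<in>c ` space MD. \<phi> z * measure M (c -` {z} \<inter> space MD))"
proof -
  have fin: "finite (c ` space MD)" and cm: "c \<in> MD \<rightarrow>\<^sub>M count_space UNIV"
    using c by (auto simp: coarsening_def)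
  have sp: "space M = space MD" using sM sets_eq_imp_space_eq by blast
  have meas: "c -` {z} \<inter> space MD \<in> sets M" for z
    using measurable_sets[OF cm, of "{z}"] sM by simp
  have "(\<integral>x. \<phi> (c x) \<partial>M) = (\<integral>x. (\<Sum>z\<in>c ` space MD. \<phi> z * indicator (c -` {z} \<inter> space MD) x) \<partial>M)"
  proof (rule Bochner_Integration.integral_cong[OF refl])
    fix x assume x: "x \<in> space M"
    have "(\<Sum>z\<in>c ` space MD. \<phi> z * indicator (c -` {z} \<inter> space MD) x) = (\<Sum>z\<in>c ` space MD. if c x = z then \<phi> z else 0)"
      by (rule sum.cong) (use x sp in \<open>auto simp: indicator_def\<close>)
    also have "\<dots> = \<phi> (c x)" using fin x sp by (simp add: sum.delta)
    finally show "\<phi> (c x) = (\<Sum>z\<in>c ` space MD. \<phi> z * indicator (c -` {z} \<inter> space MD) x)" by simp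
  qed
  also have "\<dots> = (\<Sum>z\<in>c ` space MD. (\<integral>x. \<phi> z * indicator (c -` {z} \<inter> space MD) x \<partial>M))"
    by (rule Bochner_Integration.integral_sum)
       (use meas finite_measure.emeasure_finite[OF M] in \<open>auto intro!: integrable_mult_right simp: top.not_eq_extremum\<close>)
  also have "\<dots> = (\<Sum>z\<in>c ` space MD. \<phi> z * measure M (c -` {z} \<inter> space MD))"
    by (rule sum.cong) (use meas finite_measure.emeasure_finite[OF M] in \<open>auto simp: top.not_eq_extremum\<close>)
  finally show ?thesis .
qed


lemma dist_int:
  fixes \<psi> :: "'d \<Rightarrow> real"
  assumes M: "finite_measure M" and sM: "sets M = sets MD" and c: "coarsening MD c"
  shows "(\<integral>a. \<psi> a \<partial>distr M (count_space UNIV) c) = (\<Sum>z\<in>c ` space MD. \<psi> z * measure M (c -` {z} \<inter> space MD))"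
proof -
  have cm: "c \<in> MD \<rightarrow>\<^sub>M count_space UNIV" using c by (simp add: coarsening_def)
  have cm': "c \<in> M \<rightarrow>\<^sub>M count_space UNIV"
    by (subst measurable_cong_sets[OF sM refl]) (rule cm)
  have "(\<integral>a. \<psi> a \<partial>distr M (count_space UNIV) c) = (\<integral>x. \<psi> (c x) \<partial>M)"
    by (rule integral_distr[OF cm' borel_measurable_count_space])
  also have "\<dots> = (\<Sum>z\<in>c ` space MD. \<psi> z * measure M (c -` {z} \<inter> space MD))"
    by (rule int_c[OF M sM c])
  finally show ?thesis .
qed

lemma sum_meas_1:
  assumes M: "prob_space M" and sM: "sets M = sets MD" and c: "coarsening MD c"
  shows "(\<Sum>z\<in>c ` space MD. measure M (c -` {z} \<inter> space MD)) = 1"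
proof -
  have "(\<integral>x. (\<lambda>_. 1::real) (c x) \<partial>M) = (\<Sum>z\<in>c ` space MD. 1 * measure M (c -` {z} \<inter> space MD))"
    by (rule int_c[OF prob_space.axioms(1)[OF M] sM c])
  moreover have "(\<integral>x. (\<lambda>_. 1::real) (c x) \<partial>M) = 1"
    using prob_space.prob_space[OF M] by simp
  ultimately show ?thesis by simp
qed

lemma eps_formula:
  assumes M1: "prob_space M1" and s1: "sets M1 = sets MD"
    and M2: "prob_space M2" and s2: "sets M2 = sets MD" and c: "coarsening MD c"
  shows "eps_c c M1 M2 = (\<Sum>z\<in>c ` space MD. (measure M1 (c -` {z} \<inter> space MD) - measure M2 (c -` {z} \<inter> space MD))\<^sup>2)"
proof -
  define F where "F = c ` space MD"
  define p where "p z = measure M1 (c -` {z} \<inter> space MD)" for z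
  define q where "q z = measure M2 (c -` {z} \<inter> space MD)" for z
  have fin: "finite F" using c by (simp add: coarsening_def F_def)
  have f1: "finite_measure M1" "finite_measure M2" using M1 M2 by (auto intro: prob_space.axioms(1))
  have sp: "sum p F = 1" "sum q F = 1"
    using sum_meas_1[OF M1 s1 c] sum_meas_1[OF M2 s2 c] by (simp_all add: F_def p_def q_def)
  have off: "(\<Sum>z\<in>F. of_bool (w \<noteq> z) * r z) = sum r F - r w" if "w \<in> F" for w and r :: "_ \<Rightarrow> real"
  proof -
    have "(\<Sum>z\<in>F. of_bool (w \<noteq> z) * r z) = (\<Sum>z\<in>F. r z - (if w = z then r z else 0))"
      by (rule sum.cong) auto
    also have "\<dots> = sum r F - r w" using fin that by (simp add: sum_subtractf sum.delta)
    finally show ?thesis .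
  qed
  have DI1: "(\<integral>a. \<psi> a \<partial>distr M1 (count_space UNIV) c) = (\<Sum>z\<in>F. \<psi> z * p z)" for \<psi> :: "_ \<Rightarrow> real"
    using dist_int[OF f1(1) s1 c] by (simp add: F_def p_def)
  have DI2: "(\<integral>a. \<psi> a \<partial>distr M2 (count_space UNIV) c) = (\<Sum>z\<in>F. \<psi> z * q z)" for \<psi> :: "_ \<Rightarrow> real"
    using dist_int[OF f1(2) s2 c] by (simp add: F_def q_def)
  have t1: "(\<integral>a. (\<integral>b. of_bool (a \<noteq> b) \<partial>distr M2 (count_space UNIV) c) \<partial>distr M1 (count_space UNIV) c)
      = (\<Sum>w\<in>F. (1 - q w) * p w)"
    unfolding DI1 DI2 by (rule sum.cong[OF refl]) (simp add: off sp)
  have t2: "(\<integral>a. (\<integral>b. of_bool (a \<noteq> b) \<partial>distr M1 (count_space UNIV) c) \<partial>distr M1 (count_space UNIV) c)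
      = (\<Sum>w\<in>F. (1 - p w) * p w)"
    unfolding DI1 by (rule sum.cong[OF refl]) (simp add: off sp)
  have t3: "(\<integral>a. (\<integral>b. of_bool (a \<noteq> b) \<partial>distr M2 (count_space UNIV) c) \<partial>distr M2 (count_space UNIV) c)
      = (\<Sum>w\<in>F. (1 - q w) * q w)"
    unfolding DI2 by (rule sum.cong[OF refl]) (simp add: off sp)
  have "eps_c c M1 M2 = 2 * (\<Sum>w\<in>F. (1 - q w) * p w) - (\<Sum>w\<in>F. (1 - p w) * p w) - (\<Sum>w\<in>F. (1 - q w) * q w)"
    unfolding eps_c_def eps01_def t1 t2 t3 ..
  also have "\<dots> = (\<Sum>w\<in>F. (p w - q w)\<^sup>2 + (p w - q w))"
    by (simp add: sum_distrib_left sum_subtractf[symmetric] sum.distrib[symmetric] power2_eq_square algebra_simps)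
  also have "\<dots> = (\<Sum>w\<in>F. (p w - q w)\<^sup>2)"
    using sp by (simp add: sum.distrib sum_subtractf)
  finally show ?thesis by (simp add: F_def p_def q_def)
qed

lemma cs_final:
  fixes K p q :: "'d \<Rightarrow> real"
  assumes fin: "finite F" and K: "\<And>z. z \<in> F \<Longrightarrow> 0 \<le> K z \<and> K z \<le> 1"
  shows "(\<Sum>z\<in>F. K z * p z) - (\<Sum>z\<in>F. K z * q z) \<le> sqrt ((\<Sum>z\<in>F. (p z - q z)\<^sup>2) * (\<Sum>z\<in>F. K z))"
proof -
  have eq: "(\<Sum>z\<in>F. K z * p z) - (\<Sum>z\<in>F. K z * q z) = (\<Sum>z\<in>F. (p z - q z) * K z)"
    by (simp add: sum_subtractf[symmetric] algebra_simps)
  have A: "0 \<le> (\<Sum>z\<in>F. (p z - q z)\<^sup>2)" by (rule sum_nonneg) simp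
  have B: "0 \<le> (\<Sum>z\<in>F. K z)" by (rule sum_nonneg) (use K in blast)
  have KK: "(\<Sum>z\<in>F. (K z)\<^sup>2) \<le> (\<Sum>z\<in>F. K z)"
  proof (rule sum_mono)
    fix z assume "z \<in> F"
    then have "0 \<le> K z" "K z \<le> 1" using K by auto
    then show "(K z)\<^sup>2 \<le> K z" by (simp add: power2_eq_square mult_left_le)
  qed
  have "(\<Sum>z\<in>F. (p z - q z) * K z)\<^sup>2 \<le> (\<Sum>z\<in>F. (p z - q z)\<^sup>2) * (\<Sum>z\<in>F. (K z)\<^sup>2)"
    by (rule Cauchy_Schwarz_ineq_sum)
  also have "\<dots> \<le> (\<Sum>z\<in>F. (p z - q z)\<^sup>2) * (\<Sum>z\<in>F. K z)"
    by (rule mult_left_mono[OF KK A])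
  finally have "(\<Sum>z\<in>F. (p z - q z) * K z) \<le> sqrt ((\<Sum>z\<in>F. (p z - q z)\<^sup>2) * (\<Sum>z\<in>F. K z))"
    by (rule real_le_rsqrt)
  then show ?thesis by (simp add: eq)
qed


lemma good_abs_diff:
  fixes f1 f2 :: "'d \<times> 'u \<Rightarrow> real"
  assumes f1: "f1 \<in> borel_measurable (MD \<Otimes>\<^sub>M UU)" and f2: "f2 \<in> borel_measurable (MD \<Otimes>\<^sub>M UU)"
    and r1: "\<forall>z\<in>space (MD \<Otimes>\<^sub>M UU). 0 \<le> f1 z \<and> f1 z \<le> 1"
    and r2: "\<forall>z\<in>space (MD \<Otimes>\<^sub>M UU). 0 \<le> f2 z \<and> f2 z \<le> 1"
    and a1: "(\<lambda>z. Aa (fst z) (fst (snd z)) (snd (snd z))) \<in> MD \<Otimes>\<^sub>M (MD \<Otimes>\<^sub>M UU) \<rightarrow>\<^sub>M MD \<Otimes>\<^sub>M UU"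
    and a2: "(\<lambda>z. Ab (fst z) (fst (snd z)) (snd (snd z))) \<in> MD \<Otimes>\<^sub>M (MD \<Otimes>\<^sub>M UU) \<rightarrow>\<^sub>M MD \<Otimes>\<^sub>M UU"
  shows "good MD UU (\<lambda>d x u. \<bar>f1 (Aa d x u) - f2 (Ab d x u)\<bar>)"
  unfolding good_def
proof
  show "(\<lambda>z. \<bar>f1 (Aa (fst z) (fst (snd z)) (snd (snd z))) - f2 (Ab (fst z) (fst (snd z)) (snd (snd z)))\<bar>)
        \<in> borel_measurable (MD \<Otimes>\<^sub>M (MD \<Otimes>\<^sub>M UU))"
    by (rule borel_measurable_abs[OF borel_measurable_diff[OF measurable_compose[OF a1 f1] measurable_compose[OF a2 f2]]])
  have "\<bar>f1 (Aa d x u) - f2 (Ab d x u)\<bar> \<le> 1" if "d\<in>space MD" "x\<in>space MD" "u\<in>space UU" for d x u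
  proof -
    have z: "(d, x, u) \<in> space (MD \<Otimes>\<^sub>M (MD \<Otimes>\<^sub>M UU))" using that by (simp add: space_pair_measure)
    have "Aa d x u \<in> space (MD \<Otimes>\<^sub>M UU)" using measurable_space[OF a1 z] by simp
    moreover have "Ab d x u \<in> space (MD \<Otimes>\<^sub>M UU)" using measurable_space[OF a2 z] by simp
    ultimately have "0 \<le> f1 (Aa d x u)" "f1 (Aa d x u) \<le> 1" "0 \<le> f2 (Ab d x u)" "f2 (Ab d x u) \<le> 1"
      using r1 r2 by auto
    then show ?thesis by linarith
  qed
  then show "\<exists>B. \<forall>d\<in>space MD. \<forall>x\<in>space MD. \<forall>u\<in>space UU. \<bar>\<bar>f1 (Aa d x u) - f2 (Ab d x u)\<bar>\<bar> \<le> B"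
    by auto
qed

theorem theorem1:
  fixes MC :: "'c measure" and MD :: "'d measure" and G :: "('c \<times> 'd) measure"
    and UU :: "'u measure" and L :: nat and h :: "nat \<Rightarrow> 'd \<times> 'u \<Rightarrow> real"
    and T S :: "real ^ 'n \<Rightarrow> 'c \<Rightarrow> 'd measure" and \<theta> :: "real ^ 'n"
    and c :: "'d \<Rightarrow> 'd" and l :: nat and g :: "'d \<times> 'u \<Rightarrow> real"
  assumes G: "prob_space G" "sets G = sets (MC \<Otimes>\<^sub>M MD)"
    and UU: "prob_space UU"
    and h: "\<forall>k\<in>{1..L}. h k \<in> borel_measurable (MD \<Otimes>\<^sub>M UU) \<and>
              (\<forall>z\<in>space (MD \<Otimes>\<^sub>M UU). 0 \<le> h k z \<and> h k z \<le> 1)"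
    and envT: "environment MC MD T" and envS: "environment MC MD S"
    and c: "coarsening MD c"
    and l: "l \<in> {1..L}"
    and g_meas: "g \<in> borel_measurable (MD \<Otimes>\<^sub>M UU)"
    and g_range: "\<forall>z\<in>space (MD \<Otimes>\<^sub>M UU). 0 \<le> g z \<and> g z \<le> 1"
    and g_min: "\<forall>f \<in> borel_measurable (MD \<Otimes>\<^sub>M UU).
                  (\<forall>z\<in>space (MD \<Otimes>\<^sub>M UU). 0 \<le> f z \<and> f z \<le> 1) \<longrightarrow>
                  expect_env G (T \<theta>) UU (\<lambda>d x u. \<bar>g (c x, u) - h l (d, u)\<bar>)
                  + expect_env G (S \<theta>) UU (\<lambda>d x u. \<bar>g (c x, u) - h l (d, u)\<bar>)
                  \<le> expect_env G (T \<theta>) UU (\<lambda>d x u. \<bar>f (c x, u) - h l (d, u)\<bar>)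
                  + expect_env G (S \<theta>) UU (\<lambda>d x u. \<bar>f (c x, u) - h l (d, u)\<bar>)"
  shows "TD G UU (h l) T \<theta> \<le>
           (expect_env G (T \<theta>) UU (\<lambda>d x u. \<bar>h l (c x, u) - h l (x, u)\<bar>)
            + expect_env G (S \<theta>) UU (\<lambda>d x u. \<bar>h l (c x, u) - h l (x, u)\<bar>))
         + (expect_env G (T \<theta>) UU (\<lambda>d x u. \<bar>g (c x, u) - h l (d, u)\<bar>)
            + expect_env G (S \<theta>) UU (\<lambda>d x u. \<bar>g (c x, u) - h l (d, u)\<bar>))
         + TD G UU (h l) S \<theta>
         + sqrt (eps_c c (marginal G (T \<theta>)) (marginal G (S \<theta>))
                 * (\<integral>u. (\<Sum>x\<in>c ` space MD. \<bar>g (x, u) - h l (x, u)\<bar>) \<partial>UU))"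
proof -
  have hm: "h l \<in> borel_measurable (MD \<Otimes>\<^sub>M UU)" and hr: "\<forall>z\<in>space (MD \<Otimes>\<^sub>M UU). 0 \<le> h l z \<and> h l z \<le> 1"
    using h l by blast+
  have cm: "c \<in> MD \<rightarrow>\<^sub>M MD" and fin: "finite (c ` space MD)" using c by (auto simp: coarsening_def)
  interpret Te: envs MC MD G UU "T \<theta>"
  proof (rule envs.intro[OF G UU])
    show "T \<theta> \<in> MC \<rightarrow>\<^sub>M prob_algebra MD" using envT unfolding environment_def by blast
  qed
  interpret Se: envs MC MD G UU "S \<theta>"
  proof (rule envs.intro[OF G UU])
    show "S \<theta> \<in> MC \<rightarrow>\<^sub>M prob_algebra MD" using envS unfolding environment_def by blast
  qed
  have m1: "(\<lambda>z. (fst z, snd (snd z))) \<in> MD \<Otimes>\<^sub>M (MD \<Otimes>\<^sub>M UU) \<rightarrow>\<^sub>M MD \<Otimes>\<^sub>M UU"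
    by (rule measurable_Pair[OF measurable_fst measurable_compose[OF measurable_snd measurable_snd]])
  have m2: "(\<lambda>z. (fst (snd z), snd (snd z))) \<in> MD \<Otimes>\<^sub>M (MD \<Otimes>\<^sub>M UU) \<rightarrow>\<^sub>M MD \<Otimes>\<^sub>M UU"
    by (rule measurable_Pair[OF measurable_compose[OF measurable_snd measurable_fst] measurable_compose[OF measurable_snd measurable_snd]])
  have m3: "(\<lambda>z. (c (fst (snd z)), snd (snd z))) \<in> MD \<Otimes>\<^sub>M (MD \<Otimes>\<^sub>M UU) \<rightarrow>\<^sub>M MD \<Otimes>\<^sub>M UU"
    by (rule measurable_Pair[OF measurable_compose[OF measurable_compose[OF measurable_snd measurable_fst] cm] measurable_compose[OF measurable_snd measurable_snd]])
  have gTD: "good MD UU (\<lambda>d x u. \<bar>h l (d, u) - h l (x, u)\<bar>)"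
    by (rule good_abs_diff[where Aa="\<lambda>d x u. (d, u)" and Ab="\<lambda>d x u. (x, u)", OF hm hm hr hr m1 m2])
  have gGam: "good MD UU (\<lambda>d x u. \<bar>h l (c x, u) - h l (x, u)\<bar>)"
    by (rule good_abs_diff[where Aa="\<lambda>d x u. (c x, u)" and Ab="\<lambda>d x u. (x, u)", OF hm hm hr hr m3 m2])
  have gPhi: "good MD UU (\<lambda>d x u. \<bar>g (c x, u) - h l (d, u)\<bar>)"
    by (rule good_abs_diff[where Aa="\<lambda>d x u. (c x, u)" and Ab="\<lambda>d x u. (d, u)", OF g_meas hm g_range hr m3 m1])
  have gK: "good MD UU (\<lambda>d x u. \<bar>g (c x, u) - h l (c x, u)\<bar>)"
    by (rule good_abs_diff[where Aa="\<lambda>d x u. (c x, u)" and Ab="\<lambda>d x u. (c x, u)", OF g_meas hm g_range hr m3 m3])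
  have g3: "good MD UU (\<lambda>d x u. (\<bar>h l (c x, u) - h l (x, u)\<bar> + \<bar>g (c x, u) - h l (d, u)\<bar>) + \<bar>g (c x, u) - h l (c x, u)\<bar>)"
    by (rule Te.good_add[OF Te.good_add[OF gGam gPhi] gK])
  have g3': "good MD UU (\<lambda>d x u. (\<bar>h l (c x, u) - h l (x, u)\<bar> + \<bar>g (c x, u) - h l (d, u)\<bar>) + \<bar>h l (d, u) - h l (x, u)\<bar>)"
    by (rule Te.good_add[OF Te.good_add[OF gGam gPhi] gTD])
  let ?eT = "expect_env G (T \<theta>) UU" and ?eS = "expect_env G (S \<theta>) UU"
  have s1: "TD G UU (h l) T \<theta> \<le> ?eT (\<lambda>d x u. \<bar>h l (c x, u) - h l (x, u)\<bar>) + ?eT (\<lambda>d x u. \<bar>g (c x, u) - h l (d, u)\<bar>)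
      + ?eT (\<lambda>d x u. \<bar>g (c x, u) - h l (c x, u)\<bar>)"
  proof -
    have "TD G UU (h l) T \<theta> \<le> ?eT (\<lambda>d x u. (\<bar>h l (c x, u) - h l (x, u)\<bar> + \<bar>g (c x, u) - h l (d, u)\<bar>) + \<bar>g (c x, u) - h l (c x, u)\<bar>)"
      unfolding TD_def by (rule Te.ee_mono[OF gTD g3]) (smt (verit))
    also have "\<dots> = ?eT (\<lambda>d x u. \<bar>h l (c x, u) - h l (x, u)\<bar>) + ?eT (\<lambda>d x u. \<bar>g (c x, u) - h l (d, u)\<bar>)
      + ?eT (\<lambda>d x u. \<bar>g (c x, u) - h l (c x, u)\<bar>)"
      by (simp only: Te.ee_add[OF Te.good_add[OF gGam gPhi] gK] Te.ee_add[OF gGam gPhi])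
    finally show ?thesis .
  qed
  have s2: "?eS (\<lambda>d x u. \<bar>g (c x, u) - h l (c x, u)\<bar>) \<le> ?eS (\<lambda>d x u. \<bar>h l (c x, u) - h l (x, u)\<bar>) + ?eS (\<lambda>d x u. \<bar>g (c x, u) - h l (d, u)\<bar>)
      + TD G UU (h l) S \<theta>"
  proof -
    have "?eS (\<lambda>d x u. \<bar>g (c x, u) - h l (c x, u)\<bar>) \<le> ?eS (\<lambda>d x u. (\<bar>h l (c x, u) - h l (x, u)\<bar> + \<bar>g (c x, u) - h l (d, u)\<bar>) + \<bar>h l (d, u) - h l (x, u)\<bar>)"
      by (rule Se.ee_mono[OF gK g3']) (smt (verit))
    also have "\<dots> = ?eS (\<lambda>d x u. \<bar>h l (c x, u) - h l (x, u)\<bar>) + ?eS (\<lambda>d x u. \<bar>g (c x, u) - h l (d, u)\<bar>)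
      + TD G UU (h l) S \<theta>"
      unfolding TD_def by (simp only: Se.ee_add[OF Se.good_add[OF gGam gPhi] gTD] Se.ee_add[OF gGam gPhi])
    finally show ?thesis .
  qed
  define K where "K z = (\<integral>u. \<bar>g (z, u) - h l (z, u)\<bar> \<partial>UU)" for z
  have km: "(\<lambda>p. \<bar>g p - h l p\<bar>) \<in> borel_measurable (MD \<Otimes>\<^sub>M UU)"
    by (rule borel_measurable_abs[OF borel_measurable_diff[OF g_meas hm]])
  have Kmeas: "K \<in> borel_measurable MD"
  proof -
    interpret UUp: prob_space UU by (rule UU)
    have "case_prod (\<lambda>z u. \<bar>g (z, u) - h l (z, u)\<bar>) \<in> borel_measurable (MD \<Otimes>\<^sub>M UU)"
      using km by (simp add: case_prod_beta')
    then have "(\<lambda>z. \<integral>u. \<bar>g (z, u) - h l (z, u)\<bar> \<partial>UU) \<in> borel_measurable MD"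
      by (rule UUp.borel_measurable_lebesgue_integral)
    then show ?thesis by (simp add: K_def[abs_def])
  qed
  have Kprops: "integrable UU (\<lambda>u. \<bar>g (z, u) - h l (z, u)\<bar>) \<and> 0 \<le> K z \<and> K z \<le> 1" if z: "z \<in> space MD" for z
  proof -
    have pm: "Pair z \<in> UU \<rightarrow>\<^sub>M MD \<Otimes>\<^sub>M UU" by (rule measurable_Pair1'[OF z])
    have fm: "(\<lambda>u. \<bar>g (z, u) - h l (z, u)\<bar>) \<in> borel_measurable UU"
      using measurable_compose[OF pm km] by simp
    have bd: "\<bar>\<bar>g (z, u) - h l (z, u)\<bar>\<bar> \<le> 1" if "u \<in> space UU" for u
    proof -
      have "(z, u) \<in> space (MD \<Otimes>\<^sub>M UU)" using z that by (simp add: space_pair_measure)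
      then have "0 \<le> g (z, u)" "g (z, u) \<le> 1" "0 \<le> h l (z, u)" "h l (z, u) \<le> 1" using g_range hr by auto
      then show ?thesis by linarith
    qed
    have i: "integrable UU (\<lambda>u. \<bar>g (z, u) - h l (z, u)\<bar>)" by (rule bnd_int(1)[OF UU fm bd])
    have b: "\<bar>K z\<bar> \<le> 1" unfolding K_def by (rule bnd_int(2)[OF UU fm bd])
    have "0 \<le> K z" unfolding K_def by (rule integral_nonneg_AE) simp
    with i b show ?thesis by simp
  qed
  have cs: "c x \<in> space MD" if "x \<in> space MD" for x using measurable_space[OF cm that] .
  have Kc: "(\<lambda>x. K (c x)) \<in> borel_measurable MD" by (rule measurable_compose[OF cm Kmeas])
  have KcB: "\<bar>K (c x)\<bar> \<le> 1" if "x \<in> space MD" for x using Kprops[OF cs[OF that]] by simp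
  have AT: "?eT (\<lambda>d x u. \<bar>g (c x, u) - h l (c x, u)\<bar>) = (\<Sum>z\<in>c ` space MD. K z * measure (marginal G (T \<theta>)) (c -` {z} \<inter> space MD))"
  proof -
    have "?eT (\<lambda>d x u. \<bar>g (c x, u) - h l (c x, u)\<bar>) = (\<integral>x. K (c x) \<partial>marginal G (T \<theta>))"
      by (rule Te.ee_marg[OF gK _ Kc KcB]) (simp add: K_def)
    also have "\<dots> = (\<Sum>z\<in>c ` space MD. K z * measure (marginal G (T \<theta>)) (c -` {z} \<inter> space MD))"
      by (rule int_c[OF prob_space.axioms(1)[OF Te.marg(1)] Te.marg(2) c])
    finally show ?thesis .
  qed
  have AS: "?eS (\<lambda>d x u. \<bar>g (c x, u) - h l (c x, u)\<bar>) = (\<Sum>z\<in>c ` space MD. K z * measure (marginal G (S \<theta>)) (c -` {z} \<inter> space MD))"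
  proof -
    have "?eS (\<lambda>d x u. \<bar>g (c x, u) - h l (c x, u)\<bar>) = (\<integral>x. K (c x) \<partial>marginal G (S \<theta>))"
      by (rule Se.ee_marg[OF gK _ Kc KcB]) (simp add: K_def)
    also have "\<dots> = (\<Sum>z\<in>c ` space MD. K z * measure (marginal G (S \<theta>)) (c -` {z} \<inter> space MD))"
      by (rule int_c[OF prob_space.axioms(1)[OF Se.marg(1)] Se.marg(2) c])
    finally show ?thesis .
  qed
  have delta: "(\<integral>u. (\<Sum>x\<in>c ` space MD. \<bar>g (x, u) - h l (x, u)\<bar>) \<partial>UU) = (\<Sum>z\<in>c ` space MD. K z)"
    unfolding K_def
    by (rule Bochner_Integration.integral_sum) (use Kprops cs in blast)
  have eps: "eps_c c (marginal G (T \<theta>)) (marginal G (S \<theta>)) =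
     (\<Sum>z\<in>c ` space MD. (measure (marginal G (T \<theta>)) (c -` {z} \<inter> space MD) - measure (marginal G (S \<theta>)) (c -` {z} \<inter> space MD))\<^sup>2)"
    by (rule eps_formula[OF Te.marg(1) Te.marg(2) Se.marg(1) Se.marg(2) c])
  have s3: "?eT (\<lambda>d x u. \<bar>g (c x, u) - h l (c x, u)\<bar>) - ?eS (\<lambda>d x u. \<bar>g (c x, u) - h l (c x, u)\<bar>)
     \<le> sqrt (eps_c c (marginal G (T \<theta>)) (marginal G (S \<theta>)) * (\<integral>u. (\<Sum>x\<in>c ` space MD. \<bar>g (x, u) - h l (x, u)\<bar>) \<partial>UU))"
    unfolding AT AS delta eps
    by (rule cs_final[OF fin]) (use Kprops cs in blast)
  show ?thesis using s1 s2 s3 by linarith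
qed

end
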